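(* Let $n\geq 3$ and suppose the dihedral group $\mathrm{D}_{2n}$ of order $2n$ has the $m$-DCI property for some integer $m$ with $1\leq m\leq n-1$. Then $n$ is odd.
   Context: For a group $G$ and a subset $S\subseteq G$ with $1\notin S$, the Cayley digraph $\mathrm{Cay}(G,S)$ has vertex set $G$ and arc set $\{(g,sg)\mid g\in G,\ s\in S\}$. $\mathrm{Cay}(G,S)$ is a CI-digraph if for every $T\subseteq G$ with $1\notin T$ and $\mathrm{Cay}(G,T)\cong\mathrm{Cay}(G,S)$ there is $\alpha\in\mathrm{Aut}(G)$ with $S^\alpha=T$. For a positive integer $m$, $G$ has the $m$-DCI property if every Cayley digraph $\mathrm{Cay}(G,S)$ with $|S|=m$ is a CI-digraph. *)

theory Defs
  imports "HOL-Algebra.Algebra"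
begin

definition cay_arcs :: "('a, 'b) monoid_scheme \<Rightarrow> 'a set \<Rightarrow> ('a \<times> 'a) set" where
  "cay_arcs G S = {(g, s \<otimes>\<^bsub>G\<^esub> g) | g s. g \<in> carrier G \<and> s \<in> S}"

definition cay_isomorphic :: "('a, 'b) monoid_scheme \<Rightarrow> 'a set \<Rightarrow> 'a set \<Rightarrow> bool" where
  "cay_isomorphic G S T \<longleftrightarrow>
     (\<exists>f. bij_betw f (carrier G) (carrier G) \<and>
          (\<forall>g\<in>carrier G. \<forall>h\<in>carrier G.
              (g, h) \<in> cay_arcs G S \<longleftrightarrow> (f g, f h) \<in> cay_arcs G T))"

definition is_CI_digraph :: "('a, 'b) monoid_scheme \<Rightarrow> 'a set \<Rightarrow> bool" where
  "is_CI_digraph G S \<longleftrightarrow>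
     (\<forall>T. T \<subseteq> carrier G \<and> \<one>\<^bsub>G\<^esub> \<notin> T \<and> cay_isomorphic G S T
          \<longrightarrow> (\<exists>\<alpha> \<in> iso G G. \<alpha> ` S = T))"

definition has_m_DCI :: "('a, 'b) monoid_scheme \<Rightarrow> nat \<Rightarrow> bool" where
  "has_m_DCI G m \<longleftrightarrow>
     (\<forall>S. S \<subseteq> carrier G \<and> \<one>\<^bsub>G\<^esub> \<notin> S \<and> card S = m \<longrightarrow> is_CI_digraph G S)"

text \<open>Dihedral group D_{2n} of order 2n: element (i, b) stands for r^i s^b, with
  r of order n, s an involution, and s r = r^{-1} s.\<close>
definition dihedral_group :: "nat \<Rightarrow> (nat \<times> bool) monoid" where
  "dihedral_group n = \<lparr> carrier = {0..<n} \<times> UNIV,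
     Group.monoid.mult = (\<lambda>(i, a) (j, b). (if a then (i + n - j) mod n else (i + j) mod n, a \<noteq> b)),
     one = (0, False) \<rparr>"

end

theory Submission
  imports Defs
begin

definition fD :: "nat \<Rightarrow> nat \<times> bool \<Rightarrow> nat \<times> bool" where
  "fD n = (\<lambda>(i,a). if odd i then ((n - i) mod n, \<not>a) else (i,a))"
definition ngD :: "nat \<Rightarrow> nat \<times> bool \<Rightarrow> nat \<times> bool" where
  "ngD n = (\<lambda>(c,e). ((n - c) mod n, e))"
definition dm :: "nat \<Rightarrow> nat \<times> bool \<Rightarrow> nat \<times> bool \<Rightarrow> nat \<times> bool" where
  "dm n = (\<lambda>(i, a) (j, b). (if a then (i + n - j) mod n else (i + j) mod n, a \<noteq> b))"

definition Rm :: "nat \<Rightarrow> int \<Rightarrow> nat" where "Rm n U = nat (U mod int n)"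

lemma R_lt: "n > 0 \<Longrightarrow> Rm n U < n"
  unfolding Rm_def by (simp add: nat_less_iff)
lemma int_R: "n > 0 \<Longrightarrow> int (Rm n U) = U mod int n"
  unfolding Rm_def by simp
lemma R_id: "c < n \<Longrightarrow> Rm n (int c) = c"
  unfolding Rm_def by (simp add: zmod_int[symmetric])
lemma R_eq: "n > 0 \<Longrightarrow> Rm n U = Rm n V \<longleftrightarrow> U mod int n = V mod int n"
  unfolding Rm_def by (simp add: eq_nat_nat_iff)
lemma R_add: "n > 0 \<Longrightarrow> (Rm n U + Rm n V) mod n = Rm n (U + V)"
proof -
  assume n: "n > 0"
  have "int ((Rm n U + Rm n V) mod n) = (U mod n + V mod n) mod n" by (simp add: zmod_int int_R n)
  also have "\<dots> = (U + V) mod n" by (simp add: mod_add_eq)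
  finally show ?thesis by (metis Rm_def nat_int)
qed
lemma R_sub: "n > 0 \<Longrightarrow> (Rm n U + n - Rm n V) mod n = Rm n (U - V)"
proof -
  assume n: "n > 0"
  have le: "Rm n V \<le> Rm n U + n" using R_lt[OF n, of V] by simp
  have "int ((Rm n U + n - Rm n V) mod n) = (U mod n + n - V mod n) mod n"
    using le by (simp add: zmod_int int_R n of_nat_diff)
  also have "\<dots> = ((U mod n - V mod n) + int n) mod int n"
    by (rule arg_cong[where f="\<lambda>x. x mod int n"]) simp
  also have "\<dots> = (U mod n - V mod n) mod n" by (rule mod_add_self2)
  also have "\<dots> = (U - V) mod n" by (simp add: mod_diff_eq)
  finally show ?thesis by (metis Rm_def nat_int)
qed
lemma R_neg: "n > 0 \<Longrightarrow> (n - Rm n U) mod n = Rm n (- U)"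
  using R_sub[of n 0 U] by (simp add: Rm_def)
lemma R_par: "even n \<Longrightarrow> n > 0 \<Longrightarrow> even (Rm n U) \<longleftrightarrow> even U"
proof -
  assume "even n" "n > 0"
  have "even (Rm n U) \<longleftrightarrow> even (int (Rm n U))" by simp
  also have "\<dots> \<longleftrightarrow> even (U mod int n)" using \<open>n > 0\<close> by (simp add: int_R)
  also have "\<dots> \<longleftrightarrow> even U" using \<open>even n\<close> by (simp add: dvd_mod_iff)
  finally show ?thesis .
qed

lemma dmR: "n > 0 \<Longrightarrow> dm n (Rm n U, a) (Rm n V, b) = (Rm n (if a then U - V else U + V), a \<noteq> b)"
  by (simp add: dm_def R_add R_sub)
lemma fDR: "even n \<Longrightarrow> n > 0 \<Longrightarrow> fD n (Rm n U, b) = (if odd U then (Rm n (-U), \<not> b) else (Rm n U, b))"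
  by (simp add: fD_def R_par R_neg)
lemma ngDR: "n > 0 \<Longrightarrow> ngD n (Rm n U, b) = (Rm n (-U), b)"
  by (simp add: ngD_def R_neg)

lemma fwdR:
  assumes "even n" "n > 0"
  shows "fD n (dm n (Rm n C,e) (Rm n I,a)) = dm n (fD n (Rm n C,e)) (fD n (Rm n I,a)) \<or>
         fD n (dm n (Rm n C,e) (Rm n I,a)) = dm n (fD n (ngD n (Rm n C,e))) (fD n (Rm n I,a))"
  using assms
  apply (cases e; cases a; cases "even C"; cases "even I")
  apply (simp_all add: dmR fDR ngDR R_eq)
  done

lemma fwd:
  assumes "even n" "n > 0" "c < n" "i < n"
  shows "fD n (dm n (c,e) (i,a)) = dm n (fD n (c,e)) (fD n (i,a)) \<or>
         fD n (dm n (c,e) (i,a)) = dm n (fD n (ngD n (c,e))) (fD n (i,a))"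
  using fwdR[OF assms(1,2), of "int c" e "int i" a] by (simp add: R_id assms)

lemma Rg: "x < 2 * n \<Longrightarrow> x mod n = (if x < n then x else x - n)" for x n :: nat
  by (auto simp: le_mod_geq)

lemma D_carrier: "carrier (dihedral_group n) = {0..<n} \<times> UNIV"
  by (simp add: dihedral_group_def)
lemma D_mult: "x \<otimes>\<^bsub>dihedral_group n\<^esub> y = dm n x y"
  by (simp add: dihedral_group_def dm_def)
lemma D_one: "\<one>\<^bsub>dihedral_group n\<^esub> = (0, False)"
  by (simp add: dihedral_group_def)

lemma fD_carrier: "n > 0 \<Longrightarrow> x \<in> {0..<n} \<times> (UNIV::bool set) \<Longrightarrow> fD n x \<in> {0..<n} \<times> (UNIV::bool set)"
  by (cases x) (auto simp: fD_def)
lemma ngD_carrier: "n > 0 \<Longrightarrow> x \<in> {0..<n} \<times> (UNIV::bool set) \<Longrightarrow> ngD n x \<in> {0..<n} \<times> (UNIV::bool set)"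
  by (cases x) (auto simp: ngD_def)
lemma fD_inv: "even n \<Longrightarrow> n > 0 \<Longrightarrow> x \<in> {0..<n} \<times> (UNIV::bool set) \<Longrightarrow> fD n (fD n x) = x"
proof -
  assume n: "even n" "n > 0" and x: "x \<in> {0..<n} \<times> (UNIV::bool set)"
  obtain c b where cb: "x = (c, b)" "c < n" using x by auto
  have "fD n (fD n (Rm n (int c), b)) = (Rm n (int c), b)" by (simp add: fDR n)
  thus ?thesis using cb by (simp add: R_id)
qed
lemma fD_ngD: "even n \<Longrightarrow> n > 0 \<Longrightarrow> x \<in> {0..<n} \<times> (UNIV::bool set) \<Longrightarrow> fD n (ngD n x) = ngD n (fD n x)"
proof -
  assume n: "even n" "n > 0" and x: "x \<in> {0..<n} \<times> (UNIV::bool set)"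
  obtain c b where cb: "x = (c, b)" "c < n" using x by auto
  have "fD n (ngD n (Rm n (int c), b)) = ngD n (fD n (Rm n (int c), b))" by (simp add: fDR ngDR n)
  thus ?thesis using cb by (simp add: R_id)
qed
lemma dm_carrier: "n > 0 \<Longrightarrow> dm n x y \<in> {0..<n} \<times> (UNIV::bool set)"
  by (cases x; cases y) (auto simp: dm_def)

lemma arcs_iff: "g \<in> carrier G \<Longrightarrow> (g, h) \<in> cay_arcs G S \<longleftrightarrow> (\<exists>s\<in>S. h = s \<otimes>\<^bsub>G\<^esub> g)"
  by (auto simp: cay_arcs_def)

lemma main_iso:
  assumes n: "even n" "n > 0"
    and sym: "\<And>x. x \<in> {0..<n} \<times> (UNIV::bool set) \<Longrightarrow> P x \<Longrightarrow> P (ngD n x)"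
  shows "cay_isomorphic (dihedral_group n) {x \<in> carrier (dihedral_group n). P x}
           {x \<in> carrier (dihedral_group n). P (fD n x)}"
proof -
  let ?C = "{0..<n} \<times> (UNIV::bool set)"
  let ?f = "fD n"
  have fwd': "?f (dm n s g) = dm n (?f s) (?f g) \<or> ?f (dm n s g) = dm n (?f (ngD n s)) (?f g)"
    if "s \<in> ?C" "g \<in> ?C" for s g
  proof -
    obtain c e where s: "s = (c,e)" by (cases s)
    obtain i a where g: "g = (i,a)" by (cases g)
    have ci: "c < n" "i < n" using that s g by auto
    show ?thesis using fwd[OF n ci, of e a] unfolding s g .
  qed
  have inv: "\<forall>a\<in>?C. ?f (?f a) = a" using fD_inv[OF n] by blast
  have img: "?f ` ?C \<subseteq> ?C" using fD_carrier[OF n(2)] by blast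
  have bij: "bij_betw ?f ?C ?C"
    by (rule bij_betw_byWitness[OF inv inv img img])
  show ?thesis
    unfolding cay_isomorphic_def
  proof (intro exI conjI ballI)
    show "bij_betw ?f (carrier (dihedral_group n)) (carrier (dihedral_group n))"
      using bij by (simp add: D_carrier)
  next
    fix g h assume g: "g \<in> carrier (dihedral_group n)" and h: "h \<in> carrier (dihedral_group n)"
    have gC: "g \<in> ?C" and hC: "h \<in> ?C" using g h by (simp_all add: D_carrier)
    have fgC: "?f g \<in> ?C" using fD_carrier[OF n(2) gC] .
    have fgD: "?f g \<in> carrier (dihedral_group n)" using fgC by (simp add: D_carrier)
    show "(g, h) \<in> cay_arcs (dihedral_group n) {x \<in> carrier (dihedral_group n). P x} \<longleftrightarrow>
          (?f g, ?f h) \<in> cay_arcs (dihedral_group n) {x \<in> carrier (dihedral_group n). P (?f x)}"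
      unfolding arcs_iff[OF g] arcs_iff[OF fgD] D_mult D_carrier
    proof
      assume "\<exists>s\<in>{x \<in> ?C. P x}. h = dm n s g"
      then obtain s where s: "s \<in> ?C" "P s" and hs: "h = dm n s g" by blast
      have c1: "?f s \<in> ?C" "P (?f (?f s))" using s fD_carrier[OF n(2)] fD_inv[OF n] by simp_all
      have ns: "ngD n s \<in> ?C" using ngD_carrier[OF n(2) s(1)] .
      have c2: "?f (ngD n s) \<in> ?C" "P (?f (?f (ngD n s)))"
        using fD_carrier[OF n(2) ns] fD_inv[OF n ns] sym[OF s] by simp_all
      have "?f h = dm n (?f s) (?f g) \<or> ?f h = dm n (?f (ngD n s)) (?f g)"
        using fwd'[OF s(1) gC] unfolding hs .
      thus "\<exists>t\<in>{x \<in> ?C. P (?f x)}. ?f h = dm n t (?f g)"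
      proof
        assume "?f h = dm n (?f s) (?f g)" thus ?thesis using c1 by (intro bexI[of _ "?f s"]) simp_all
      next
        assume "?f h = dm n (?f (ngD n s)) (?f g)" thus ?thesis using c2 by (intro bexI[of _ "?f (ngD n s)"]) simp_all
      qed
    next
      assume "\<exists>t\<in>{x \<in> ?C. P (?f x)}. ?f h = dm n t (?f g)"
      then obtain t where t: "t \<in> ?C" "P (?f t)" and ht: "?f h = dm n t (?f g)" by blast
      have hh: "h = ?f (dm n t (?f g))" using ht fD_inv[OF n hC] by simp
      have ffg: "?f (?f g) = g" using fD_inv[OF n gC] .
      have c1: "?f t \<in> ?C" using fD_carrier[OF n(2) t(1)] .
      have c2: "?f (ngD n t) \<in> ?C" "P (?f (ngD n t))"
        using fD_carrier[OF n(2) ngD_carrier[OF n(2) t(1)]] sym[OF c1 t(2)] fD_ngD[OF n t(1)] by simp_all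
      have "h = dm n (?f t) g \<or> h = dm n (?f (ngD n t)) g"
        using fwd'[OF t(1) fgC] unfolding hh ffg .
      thus "\<exists>s\<in>{x \<in> ?C. P x}. h = dm n s g"
      proof
        assume "h = dm n (?f t) g" thus ?thesis using c1 t(2) by (intro bexI[of _ "?f t"]) simp_all
      next
        assume "h = dm n (?f (ngD n t)) g" thus ?thesis using c2 by (intro bexI[of _ "?f (ngD n t)"]) simp_all
      qed
    qed
  qed
qed

definition f1 :: "nat \<Rightarrow> nat \<times> bool \<Rightarrow> nat \<times> bool" where
  "f1 n = (\<lambda>(i,a). if \<not>a then (if i < n div 2 then (i,False) else (i - n div 2, True))
     else (if (n - i) mod n < n div 2 then ((n - i) mod n + n div 2, False) else ((n - i) mod n, True)))"
definition g1 :: "nat \<Rightarrow> nat \<times> bool \<Rightarrow> nat \<times> bool" where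
  "g1 n = (\<lambda>(y,b). if \<not>b then (if y < n div 2 then (y,False) else ((n - (y - n div 2)) mod n, True))
     else (if y < n div 2 then (y + n div 2, False) else ((n - y) mod n, True)))"

lemma g1f1: "even n \<Longrightarrow> n > 0 \<Longrightarrow> x \<in> {0..<n} \<times> (UNIV::bool set) \<Longrightarrow> g1 n (f1 n x) = x"
  apply (elim evenE) apply (cases x) apply (rename_tac a b) apply (case_tac b)
  apply (simp_all add: f1_def g1_def Rg split: if_splits)
  apply (arith+)?
  done
lemma f1_eq: "even n \<Longrightarrow> n > 0 \<Longrightarrow> x \<in> {0..<n} \<times> (UNIV::bool set) \<Longrightarrow> f1 n (dm n (0,True) x) = dm n (n div 2, False) (f1 n x)"
  apply (elim evenE) apply (cases x) apply (rename_tac a b) apply (case_tac b)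
  apply (simp_all add: f1_def dm_def Rg split: if_splits)
  apply (arith+)?
  done
lemma f1_carrier: "even n \<Longrightarrow> n > 0 \<Longrightarrow> x \<in> {0..<n} \<times> (UNIV::bool set) \<Longrightarrow> f1 n x \<in> {0..<n} \<times> (UNIV::bool set)"
  apply (elim evenE) apply (cases x) apply (rename_tac a b) apply (case_tac b)
  apply (simp_all add: f1_def Rg split: if_splits)
  apply (arith+)?
  done
lemma m1_iso:
  assumes n: "even n" "n > 0"
  shows "cay_isomorphic (dihedral_group n) {(0,True)} {(n div 2, False)}"
proof -
  let ?C = "{0..<n} \<times> (UNIV::bool set)"
  let ?f = "f1 n"
  have inj: "inj_on ?f ?C" by (rule inj_on_inverseI[where g="g1 n"]) (rule g1f1[OF n])
  have img: "?f ` ?C \<subseteq> ?C" using f1_carrier[OF n] by blast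
  have fin: "finite ?C" by simp
  have bij: "bij_betw ?f ?C ?C"
    unfolding bij_betw_def using inj endo_inj_surj[OF fin img inj] by blast
  show ?thesis
    unfolding cay_isomorphic_def
  proof (intro exI conjI ballI)
    show "bij_betw ?f (carrier (dihedral_group n)) (carrier (dihedral_group n))"
      using bij by (simp add: D_carrier)
  next
    fix g h assume g: "g \<in> carrier (dihedral_group n)" and h: "h \<in> carrier (dihedral_group n)"
    have gC: "g \<in> ?C" and hC: "h \<in> ?C" using g h by (auto simp: D_carrier)
    have fgC: "?f g \<in> ?C" using f1_carrier[OF n gC] .
    have "h = dm n (0,True) g \<longleftrightarrow> ?f h = dm n (n div 2, False) (?f g)"
    proof
      assume "h = dm n (0,True) g" thus "?f h = dm n (n div 2, False) (?f g)" using f1_eq[OF n gC] by simp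
    next
      assume "?f h = dm n (n div 2, False) (?f g)"
      hence "?f h = ?f (dm n (0,True) g)" using f1_eq[OF n gC] by simp
      hence "g1 n (?f h) = g1 n (?f (dm n (0,True) g))" by simp
      thus "h = dm n (0,True) g" using g1f1[OF n hC] g1f1[OF n dm_carrier[OF n(2)]] by simp
    qed
    thus "(g, h) \<in> cay_arcs (dihedral_group n) {(0,True)} \<longleftrightarrow>
          (?f g, ?f h) \<in> cay_arcs (dihedral_group n) {(n div 2, False)}"
      using g fgC by (simp add: arcs_iff D_mult D_carrier)
  qed
qed

lemma iso_hom:
  assumes "\<alpha> \<in> iso (dihedral_group n) (dihedral_group n)" "x \<in> carrier (dihedral_group n)" "y \<in> carrier (dihedral_group n)"
  shows "\<alpha> (dm n x y) = dm n (\<alpha> x) (\<alpha> y)" "\<alpha> x \<in> {0..<n} \<times> (UNIV::bool set)"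
  using assms by (auto simp: iso_def hom_def D_mult D_carrier)

lemma iso_one:
  assumes "\<alpha> \<in> iso (dihedral_group n) (dihedral_group n)" "n > 0"
  shows "\<alpha> (0, False) = (0, False)"
proof -
  have c: "(0,False) \<in> carrier (dihedral_group n)" using assms by (simp add: D_carrier)
  have "\<alpha> (0,False) = \<alpha> (dm n (0,False) (0,False))" by (simp add: dm_def)
  also have "\<dots> = dm n (\<alpha> (0,False)) (\<alpha> (0,False))" using iso_hom[OF assms(1) c c] by simp
  finally have e: "\<alpha> (0,False) = dm n (\<alpha> (0,False)) (\<alpha> (0,False))" .
  obtain c b where cb: "\<alpha> (0,False) = (c,b)" by (cases "\<alpha> (0,False)")
  have "c < n" using iso_hom(2)[OF assms(1) c c] cb by auto
  thus ?thesis using e cb by (cases b) (auto simp: dm_def Rg split: if_splits)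
qed


theorem lemma3p3:
  fixes n m :: nat
  assumes "n \<ge> 3" and "1 \<le> m" and "m \<le> n - 1"
    and "has_m_DCI (dihedral_group n) m"
  shows "odd n"
proof (rule ccontr)
  assume "\<not> odd n"
  hence ev: "even n" by simp
  have n0: "n > 0" using assms(1) by simp
  let ?D = "dihedral_group n"
  have DCI: "\<And>S. S \<subseteq> carrier ?D \<Longrightarrow> (0,False) \<notin> S \<Longrightarrow> card S = m \<Longrightarrow> is_CI_digraph ?D S"
    using assms(4) by (simp add: has_m_DCI_def D_one)
  have inj: "\<And>\<alpha>. \<alpha> \<in> iso ?D ?D \<Longrightarrow> inj_on \<alpha> (carrier ?D)"
    by (auto simp: iso_def bij_betw_def)
  show False
  proof (cases "m = 1")
    case True
    let ?S = "{(0::nat,True)}"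
    let ?T = "{(n div 2, False)}"
    have ci: "is_CI_digraph ?D ?S" using DCI[of ?S] True n0 by (simp add: D_carrier)
    have cond: "?T \<subseteq> carrier ?D \<and> \<one>\<^bsub>?D\<^esub> \<notin> ?T \<and> cay_isomorphic ?D ?S ?T"
      using m1_iso[OF ev n0] ev assms(1) by (auto simp: D_carrier D_one)
    have "\<exists>\<alpha>\<in>iso ?D ?D. \<alpha> ` ?S = ?T"
      using mp[OF spec[where x="?T", OF ci[unfolded is_CI_digraph_def]] cond] .
    then obtain \<alpha> where \<alpha>: "\<alpha> \<in> iso ?D ?D" "\<alpha> ` ?S = ?T" by blast
    hence a0: "\<alpha> (0,True) = (n div 2, False)" by simp
    have c: "(0,True) \<in> carrier ?D" "(1,False) \<in> carrier ?D" using assms(1) by (auto simp: D_carrier)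
    obtain v where v: "\<alpha> (1,False) = v" "v \<in> {0..<n} \<times> (UNIV::bool set)"
      using iso_hom(2)[OF \<alpha>(1) c(2) c(2)] by auto
    have e1: "\<alpha> (dm n (0,True) (1,False)) = dm n (n div 2, False) v"
      using iso_hom(1)[OF \<alpha>(1) c(1) c(2)] a0 v by simp
    have e2: "\<alpha> (dm n (1,False) (0,True)) = dm n v (n div 2, False)"
      using iso_hom(1)[OF \<alpha>(1) c(2) c(1)] a0 v by simp
    have comm: "dm n (n div 2, False) v = dm n v (n div 2, False)"
      using v(2) ev by (cases v) (auto simp: dm_def add.commute elim!: evenE)
    have d1: "dm n (0,True) (1,False) = (n - 1, True)" using assms(1) by (simp add: dm_def)
    have d2: "dm n (1,False) (0,True) = (1, True)" using assms(1) by (simp add: dm_def)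
    have "(n - 1, True) \<in> carrier ?D" "(1::nat, True) \<in> carrier ?D" using assms(1) by (auto simp: D_carrier)
    moreover have "\<alpha> (n - 1, True) = \<alpha> (1, True)" using e1 e2 comm d1 d2 by simp
    ultimately have "(n - 1, True) = (1::nat, True)"
      using inj_onD[OF inj[OF \<alpha>(1)]] by blast
    thus False using assms(1) by simp
  next
    case False
    hence m2: "m \<ge> 2" using assms(2) by simp
    define p where "p = m div 2"
    define B where "B = (if odd m then {0..p} else {1..p}) \<union> {n-p..<n}"
    have p1: "p \<ge> 1" and p2: "2 * p < n" using m2 assms(3) assms(1) by (auto simp: p_def)
    have Bsub: "B \<subseteq> {0..<n}" using p2 by (auto simp: B_def)
    have "card B = (if odd m then p + 1 else p) + p"
    proof -
      have "card B = card (if odd m then {0..p} else {1..p}) + card {n-p..<n}"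
        unfolding B_def using p2 by (intro card_Un_disjoint) auto
      thus ?thesis using p2 by simp
    qed
    moreover have "(if odd m then p + 1 else p) + p = m" unfolding p_def by presburger
    ultimately have cardB: "card B = m" by simp
    have Bsym: "(n - c) mod n \<in> B" if "c < n" "c \<in> B" for c
    proof (cases "c = 0")
      case True thus ?thesis using that by simp
    next
      case False
      hence "(n - c) mod n = n - c" using that by simp
      thus ?thesis using that False p2 by (auto simp: B_def split: if_splits)
    qed
    have n1B: "n - 1 \<in> B" using p1 p2 by (auto simp: B_def)
    define P where "P = (\<lambda>x::nat\<times>bool. snd x \<and> fst x \<in> B)"
    let ?S = "{x \<in> carrier ?D. P x}"
    let ?T = "{x \<in> carrier ?D. P (fD n x)}"
    have Seq: "?S = B \<times> {True}" using Bsub by (auto simp: P_def D_carrier)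
    have "card ?S = m" unfolding Seq using cardB by (simp add: card_cartesian_product)
    hence ci: "is_CI_digraph ?D ?S" by (intro DCI) (auto simp: P_def)
    have iso: "cay_isomorphic ?D ?S ?T"
    proof (rule main_iso[OF ev n0])
      fix x :: "nat \<times> bool" assume "x \<in> {0..<n} \<times> UNIV" "P x"
      thus "P (ngD n x)" using Bsym by (cases x) (auto simp: P_def ngD_def)
    qed
    have one: "\<one>\<^bsub>?D\<^esub> \<notin> ?T" by (simp add: D_one P_def fD_def)
    have cond: "?T \<subseteq> carrier ?D \<and> \<one>\<^bsub>?D\<^esub> \<notin> ?T \<and> cay_isomorphic ?D ?S ?T"
      using one iso by blast
    have "\<exists>\<alpha>\<in>iso ?D ?D. \<alpha> ` ?S = ?T"
      using mp[OF spec[where x="?T", OF ci[unfolded is_CI_digraph_def]] cond] .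
    then obtain \<alpha> where \<alpha>: "\<alpha> \<in> iso ?D ?D" "\<alpha> ` ?S = ?T" by blast
    have "(1,False) \<in> ?T" using assms(1) n1B by (auto simp: D_carrier P_def fD_def)
    hence "(1,False) \<in> \<alpha> ` ?S" using \<alpha>(2) by simp
    then obtain x where x: "x \<in> ?S" "\<alpha> x = (1,False)" by (rule imageE) simp
    then obtain c where xc: "x = (c,True)" "c < n" unfolding Seq using Bsub by auto
    have xx: "dm n x x = (0,False)" using xc by (simp add: dm_def)
    have xC: "x \<in> carrier ?D" using x(1) by simp
    have "\<alpha> (dm n x x) = dm n (1,False) (1,False)" using iso_hom(1)[OF \<alpha>(1) xC xC] x(2) by simp
    hence "(0,False) = dm n (1,False) (1,False)" using iso_one[OF \<alpha>(1) n0] xx by simp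
    thus False using assms(1) by (simp add: dm_def)
  qed
qed

end
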